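(* Let $\Delta=\Delta(n)$ satisfy $\Delta\ge 3$ and $\Delta=o(n^{1/2})$. Any algorithm that, given a vertex set $V$ with $|V|=n$ and a distance oracle for an unknown connected graph $G=(V,E)$ of maximum degree at most $\Delta$, always outputs $E$, must make $\Omega(\Delta n\log n/\log\log n)$ distance queries on some such graph $G$.
   Context: A distance oracle for $G$ receives a pair $(u,v)\in V^2$ and returns the number of edges on a shortest path between $u$ and $v$ in $G$. Graphs are unweighted, undirected and simple. *)

theory Defs
  imports Complex_Main "HOL-Library.Landau_Symbols"
begin

definition simple_graph :: "'a set \<Rightarrow> 'a set set \<Rightarrow> bool" where
  "simple_graph V E \<longleftrightarrow> (\<forall>e\<in>E. \<exists>u v. e = {u, v} \<and> u \<noteq> v \<and> u \<in> V \<and> v \<in> V)"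

fun walk :: "'a set set \<Rightarrow> nat \<Rightarrow> 'a \<Rightarrow> 'a \<Rightarrow> bool" where
  "walk E 0 u v = (u = v)"
| "walk E (Suc k) u v = (\<exists>w. {u, w} \<in> E \<and> walk E k w v)"

definition connected_graph :: "'a set \<Rightarrow> 'a set set \<Rightarrow> bool" where
  "connected_graph V E \<longleftrightarrow> (\<forall>u\<in>V. \<forall>v\<in>V. \<exists>k. walk E k u v)"

definition degree :: "'a set set \<Rightarrow> 'a \<Rightarrow> nat" where
  "degree E v = card {u. {u, v} \<in> E}"

definition max_degree_le :: "'a set \<Rightarrow> 'a set set \<Rightarrow> nat \<Rightarrow> bool" where
  "max_degree_le V E d \<longleftrightarrow> (\<forall>v\<in>V. degree E v \<le> d)"

text \<open>Distance = number of edges on a shortest path (graph is connected when used).\<close>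
definition dist_graph :: "'a set set \<Rightarrow> 'a \<Rightarrow> 'a \<Rightarrow> nat" where
  "dist_graph E u v = (LEAST k. walk E k u v)"

text \<open>Deterministic adaptive query algorithms, modelled as decision trees:
  either output an edge set, or query the distance of a pair and branch on the answer.\<close>
datatype 'a qtree = Output "'a set set" | Query 'a 'a "nat \<Rightarrow> 'a qtree"

primrec run_output :: "'a qtree \<Rightarrow> ('a \<Rightarrow> 'a \<Rightarrow> nat) \<Rightarrow> 'a set set" where
  "run_output (Output F) orc = F"
| "run_output (Query u v f) orc = run_output (f (orc u v)) orc"

primrec run_queries :: "'a qtree \<Rightarrow> ('a \<Rightarrow> 'a \<Rightarrow> nat) \<Rightarrow> nat" where
  "run_queries (Output F) orc = 0"
| "run_queries (Query u v f) orc = Suc (run_queries (f (orc u v)) orc)"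

definition admissible :: "'a set \<Rightarrow> nat \<Rightarrow> 'a set set \<Rightarrow> bool" where
  "admissible V d E \<longleftrightarrow> simple_graph V E \<and> connected_graph V E \<and> max_degree_le V E d"

end

theory Submission
  imports Defs "HOL-Combinatorics.Permutations" "HOL-Library.FuncSet"
begin


lemma tree_count:
  assumes "finite R" "\<forall>h\<in>S. \<forall>u v. h u v \<in> R" "inj_on (run_output T) S"
    "\<forall>h\<in>S. run_queries T h \<le> q"
  shows "card S \<le> card R ^ q"
  using assms
proof (induction T arbitrary: S q)
  case (Output F)
  have "\<forall>x\<in>S. \<forall>y\<in>S. x = y" using Output.prems(3) by (auto simp: inj_on_def)
  then have "card S \<le> 1" by (metis card_le_Suc0_iff_eq One_nat_def card.infinite zero_le)
  moreover have "card R ^ q \<ge> 1 \<or> S = {}"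
  proof (cases "S = {}")
    case False
    then obtain h where "h \<in> S" by auto
    then have "h undefined undefined \<in> R" using Output.prems(2) by auto
    then have "card R \<ge> 1" using Output.prems(1) by (metis One_nat_def Suc_leI card_gt_0_iff empty_iff)
    then show ?thesis by simp
  qed simp
  ultimately show ?case by auto
next
  case (Query u v f)
  show ?case
  proof (cases "S = {}")
    case True then show ?thesis by simp
  next
    case False
    then obtain h0 where "h0 \<in> S" by auto
    with Query.prems(4) obtain q' where q: "q = Suc q'" by (cases q) auto
    define Sr where "Sr r = {h\<in>S. h u v = r}" for r
    have "S = (\<Union>r\<in>R. Sr r)" using Query.prems(2) by (auto simp: Sr_def)
    then have "card S \<le> (\<Sum>r\<in>R. card (Sr r))" using card_UN_le[OF Query.prems(1)] by simp
    also have "\<dots> \<le> (\<Sum>r\<in>R. card R ^ q')"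
    proof (rule sum_mono)
      fix r assume "r \<in> R"
      show "card (Sr r) \<le> card R ^ q'"
      proof (rule Query.IH[of "f r"])
        show "finite R" by fact
        show "\<forall>h\<in>Sr r. \<forall>u v. h u v \<in> R" using Query.prems(2) by (auto simp: Sr_def)
        show "inj_on (run_output (f r)) (Sr r)" using Query.prems(3)
          by (auto simp: Sr_def inj_on_def)
        show "\<forall>h\<in>Sr r. run_queries (f r) h \<le> q'" using Query.prems(4) q
          by (auto simp: Sr_def)
      qed simp
    qed
    also have "\<dots> = card R ^ q" using q by simp
    finally show ?thesis .
  qed
qed


lemma walk_mono: "walk E k u v \<Longrightarrow> E \<subseteq> E' \<Longrightarrow> walk E' k u v"
  by (induction k arbitrary: u) auto

lemma walk_append: "walk E a u w \<Longrightarrow> walk E b w v \<Longrightarrow> walk E (a + b) u v"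
  by (induction a arbitrary: u) auto

lemma walk_snoc: "walk E a u w \<Longrightarrow> {w, v} \<in> E \<Longrightarrow> walk E (Suc a) u v"
  using walk_append[of E a u w 1 v] by auto

lemma walk_sym: "walk E k u v \<Longrightarrow> walk E k v u"
proof (induction k arbitrary: u)
  case 0 then show ?case by simp
next
  case (Suc k)
  then obtain w where "{u, w} \<in> E" "walk E k w v" by auto
  then have "walk E k v w" using Suc.IH by blast
  moreover have "{w, u} \<in> E" using \<open>{u, w} \<in> E\<close> by (metis insert_commute)
  ultimately show ?case by (rule walk_snoc)
qed

lemma walk_in_V: "simple_graph V E \<Longrightarrow> walk E k u v \<Longrightarrow> (k = 0 \<and> u = v) \<or> (u \<in> V \<and> v \<in> V)"
proof (induction k arbitrary: u)
  case 0 then show ?case by simp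
next
  case (Suc k)
  then obtain w where e: "{u, w} \<in> E" "walk E k w v" by auto
  from e(1) Suc.prems(1) have "u \<in> V" "w \<in> V" unfolding simple_graph_def
    by (auto simp: doubleton_eq_iff)
  with Suc.IH[OF Suc.prems(1) e(2)] show ?case by auto
qed

definition gmap :: "('a \<Rightarrow> 'b) \<Rightarrow> 'a set set \<Rightarrow> 'b set set" where
  "gmap g E = (\<lambda>e. g ` e) ` E"

lemma walk_gmap: "walk E k a b \<Longrightarrow> walk (gmap g E) k (g a) (g b)"
proof (induction k arbitrary: a)
  case 0 then show ?case by simp
next
  case (Suc k)
  then obtain w where "{a, w} \<in> E" "walk E k w b" by auto
  then have "{g a, g w} \<in> gmap g E" unfolding gmap_def
    by (metis image_empty image_eqI image_insert)
  moreover have "walk (gmap g E) k (g w) (g b)" using Suc.IH \<open>walk E k w b\<close> by blast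
  ultimately show ?case by auto
qed

lemma simple_gmap: "simple_graph A E \<Longrightarrow> inj_on g A \<Longrightarrow> simple_graph (g ` A) (gmap g E)"
  unfolding simple_graph_def gmap_def
proof (intro ballI)
  fix e' assume H: "\<forall>e\<in>E. \<exists>u v. e = {u, v} \<and> u \<noteq> v \<and> u \<in> A \<and> v \<in> A" "inj_on g A"
    "e' \<in> (\<lambda>e. g ` e) ` E"
  then obtain e where "e \<in> E" "e' = g ` e" by auto
  then obtain u v where "e = {u, v}" "u \<noteq> v" "u \<in> A" "v \<in> A" using H(1) by blast
  have "e' = {g u, g v}" using \<open>e' = g ` e\<close> \<open>e = {u, v}\<close> by simp
  moreover have "g u \<noteq> g v" using H(2) \<open>u \<noteq> v\<close> \<open>u \<in> A\<close> \<open>v \<in> A\<close> by (meson inj_onD)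
  ultimately show "\<exists>u v. e' = {u, v} \<and> u \<noteq> v \<and> u \<in> g ` A \<and> v \<in> g ` A"
    using \<open>u \<in> A\<close> \<open>v \<in> A\<close> by (intro exI[of _ "g u"] exI[of _ "g v"]) simp
qed

lemma nbrs_gmap:
  assumes "simple_graph A E" "inj_on g A" "x \<in> A"
  shows "{u. {u, g x} \<in> gmap g E} = g ` {y. {y, x} \<in> E}"
proof
  show "g ` {y. {y, x} \<in> E} \<subseteq> {u. {u, g x} \<in> gmap g E}"
  proof
    fix u assume "u \<in> g ` {y. {y, x} \<in> E}"
    then obtain y where y: "{y, x} \<in> E" "u = g y" by blast
    have "g ` {y, x} \<in> gmap g E" unfolding gmap_def by (rule imageI[OF y(1)])
    then show "u \<in> {u. {u, g x} \<in> gmap g E}" using y by simp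
  qed
  show "{u. {u, g x} \<in> gmap g E} \<subseteq> g ` {y. {y, x} \<in> E}"
  proof
    fix u assume "u \<in> {u. {u, g x} \<in> gmap g E}"
    then obtain e where e: "e \<in> E" "{u, g x} = g ` e" unfolding gmap_def by blast
    then obtain y z where yz: "e = {y, z}" "y \<in> A" "z \<in> A" using assms(1)
      unfolding simple_graph_def by blast
    then have "{u, g x} = {g y, g z}" using e by simp
    then have "(u = g y \<and> g x = g z) \<or> (u = g z \<and> g x = g y)" by (metis doubleton_eq_iff)
    then show "u \<in> g ` {y. {y, x} \<in> E}"
    proof
      assume H: "u = g y \<and> g x = g z"
      then have "x = z" using assms(2,3) yz(3) by (metis inj_onD)
      then have "{y, x} \<in> E" using e(1) yz(1) by simp
      then show ?thesis using H by blast
    next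
      assume H: "u = g z \<and> g x = g y"
      then have "x = y" using assms(2,3) yz(2) by (metis inj_onD)
      then have "{z, x} \<in> E" using e(1) yz(1) by (metis insert_commute)
      then show ?thesis using H by blast
    qed
  qed
qed

lemma degree_gmap:
  assumes "simple_graph A E" "inj_on g A" "x \<in> A"
  shows "degree (gmap g E) (g x) = degree E x"
proof -
  have "{y. {y, x} \<in> E} \<subseteq> A"
  proof
    fix y assume "y \<in> {y. {y, x} \<in> E}"
    then obtain u v where uv: "{y, x} = {u, v}" "u \<in> A" "v \<in> A" using assms(1)
      unfolding simple_graph_def by blast
    have "y \<in> {u, v}" using uv(1) by (metis insertI1)
    then show "y \<in> A" using uv by blast
  qed
  then have "inj_on g {y. {y, x} \<in> E}" using assms(2) inj_on_subset by blast
  then show ?thesis unfolding degree_def nbrs_gmap[OF assms] by (simp add: card_image)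
qed

lemma gmap_inj:
  assumes "inj_on g A" "\<forall>e\<in>E. e \<subseteq> A" "\<forall>e\<in>E'. e \<subseteq> A" "gmap g E = gmap g E'"
  shows "E = E'"
proof -
  have "inj_on (\<lambda>e. g ` e) (Pow A)" using assms(1) inj_on_image_Pow by blast
  then show ?thesis using assms(2-4) unfolding gmap_def
    using inj_on_image_eq_iff[of "\<lambda>e. g ` e" "Pow A" E E'] by blast
qed


definition tedges :: "nat \<Rightarrow> nat set set" where
  "tedges n = {{x, (x - 1) div 2} | x. 1 \<le> x \<and> x < n}"
definition pv :: "nat \<Rightarrow> nat \<Rightarrow> nat \<Rightarrow> nat \<Rightarrow> nat" where
  "pv n t i a = n div 2 + i * t + a"
definition qv :: "nat \<Rightarrow> nat \<Rightarrow> nat \<Rightarrow> nat \<Rightarrow> nat \<Rightarrow> nat" where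
  "qv n k t j b = n div 2 + k * t + j * t + b"
definition fedges :: "nat \<Rightarrow> nat \<Rightarrow> nat \<Rightarrow> (nat \<times> nat \<Rightarrow> nat \<Rightarrow> nat) \<Rightarrow> nat set set" where
  "fedges n k t s = {{pv n t i a, qv n k t j (s (i, j) a)} | i j a. i < k \<and> j < k \<and> a < t}"
definition GG :: "nat \<Rightarrow> nat \<Rightarrow> nat \<Rightarrow> (nat \<times> nat \<Rightarrow> nat \<Rightarrow> nat) \<Rightarrow> nat set set" where
  "GG n k t s = tedges n \<union> fedges n k t s"
definition Sig :: "nat \<Rightarrow> nat \<Rightarrow> (nat \<times> nat \<Rightarrow> nat \<Rightarrow> nat) set" where
  "Sig k t = PiE ({..<k} \<times> {..<k}) (\<lambda>_. {p. p permutes {..<t}})"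

fun dep :: "nat \<Rightarrow> nat" where
  "dep x = (if x = 0 then 0 else Suc (dep ((x - 1) div 2)))"
declare dep.simps[simp del]

lemma dep_walk: "x < n \<Longrightarrow> walk (tedges n) (dep x) x 0"
proof (induction x rule: less_induct)
  case (less x)
  show ?case
  proof (cases "x = 0")
    case True then show ?thesis by (simp add: dep.simps)
  next
    case False
    then have "(x - 1) div 2 < x" by simp
    then have "walk (tedges n) (dep ((x - 1) div 2)) ((x - 1) div 2) 0" using less by simp
    moreover have "{x, (x - 1) div 2} \<in> tedges n" using False less.prems by (auto simp: tedges_def)
    ultimately show ?thesis using False by (subst dep.simps) auto
  qed
qed

lemma dep_bound: "2 ^ dep x \<le> x + 1"
proof (induction x rule: less_induct)
  case (less x)
  show ?case
  proof (cases "x = 0")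
    case True then show ?thesis by (simp add: dep.simps)
  next
    case False
    then have "(x - 1) div 2 < x" by simp
    then have "2 ^ dep ((x - 1) div 2) \<le> (x - 1) div 2 + 1" using less by simp
    then have "2 * 2 ^ dep ((x - 1) div 2) \<le> x + 1" using False by linarith
    then show ?thesis using False by (subst dep.simps) auto
  qed
qed

lemma tedges_simple: "simple_graph {..<n} (tedges n)"
  unfolding simple_graph_def tedges_def by fastforce

lemma pq_bounds:
  assumes "n div 2 + 2 * k * t \<le> n" "i < k" "a < t" "j < k" "b < t"
  shows "n div 2 \<le> pv n t i a" "pv n t i a < n div 2 + k * t"
        "n div 2 + k * t \<le> qv n k t j b" "qv n k t j b < n"
proof -
  have "(i + 1) * t \<le> k * t" using assms(2,3) by (intro mult_right_mono) auto
  then have "i * t + a < k * t" using assms(2,3) by (simp add: algebra_simps)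
  then show "n div 2 \<le> pv n t i a" "pv n t i a < n div 2 + k * t" by (auto simp: pv_def)
  have "(j + 1) * t \<le> k * t" using assms(4,5) by (intro mult_right_mono) auto
  then have "j * t + b < k * t" using assms(4,5) by (simp add: algebra_simps)
  then show "n div 2 + k * t \<le> qv n k t j b" "qv n k t j b < n" using assms(1)
    by (auto simp: qv_def algebra_simps)
qed

lemma Sig_perm: "s \<in> Sig k t \<Longrightarrow> i < k \<Longrightarrow> j < k \<Longrightarrow> s (i, j) permutes {..<t}"
  by (auto simp: Sig_def PiE_def Pi_def)

lemma fedges_simple:
  assumes "n div 2 + 2 * k * t \<le> n" "s \<in> Sig k t"
  shows "simple_graph {..<n} (fedges n k t s)"
  unfolding simple_graph_def fedges_def
proof (clarify)
  fix i j a assume H: "i < k" "j < k" "a < t"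
  have "s (i, j) a < t" using Sig_perm[OF assms(2) H(1,2)] H(3) permutes_in_image by fastforce
  note B = pq_bounds[OF assms(1) H(1,3) H(2) this]
  show "\<exists>u v. {pv n t i a, qv n k t j (s (i, j) a)} = {u, v} \<and> u \<noteq> v \<and> u \<in> {..<n} \<and> v \<in> {..<n}"
    using B by (intro exI[of _ "pv n t i a"] exI[of _ "qv n k t j (s (i, j) a)"]) auto
qed


lemma pv_dec: "a < t \<Longrightarrow> (pv n t i a - n div 2) div t = i \<and> (pv n t i a - n div 2) mod t = a"
  by (simp add: pv_def)

lemma qv_dec: "b < t \<Longrightarrow> (qv n k t j b - n div 2 - k * t) div t = j \<and> (qv n k t j b - n div 2 - k * t) mod t = b"
  by (simp add: qv_def)

lemma tedges_nbr:
  assumes "{u, x} \<in> tedges n"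
  shows "u \<in> {(x - 1) div 2, 2 * x + 1, 2 * x + 2} \<and> (n div 2 \<le> x \<longrightarrow> u = (x - 1) div 2)"
proof -
  obtain y where y: "{u, x} = {y, (y - 1) div 2}" "1 \<le> y" "y < n" using assms by (auto simp: tedges_def)
  have lt: "(y - 1) div 2 < n div 2" using y by linarith
  have ar: "\<And>y p m. (y::nat) \<ge> 1 \<Longrightarrow> y - 1 = 2*p + m \<Longrightarrow> m < 2 \<Longrightarrow> y = 2*p+1 \<or> y = 2*p+2" by arith
  have py: "y = 2 * ((y - 1) div 2) + 1 \<or> y = 2 * ((y - 1) div 2) + 2"
    by (rule ar[OF y(2), of _ "(y - 1) mod 2"]) simp_all
  have "(u = y \<and> x = (y - 1) div 2) \<or> (u = (y - 1) div 2 \<and> x = y)" using y(1) by (metis doubleton_eq_iff)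
  then show ?thesis
  proof
    assume H: "u = y \<and> x = (y - 1) div 2"
    then have "u = 2 * x + 1 \<or> u = 2 * x + 2" using py by simp
    then show ?thesis using H lt by auto
  qed auto
qed

lemma tedges_low: "e \<in> tedges n \<Longrightarrow> \<exists>z\<in>e. z < n div 2"
  by (auto simp: tedges_def)

context
  fixes n k t s
  assumes nb: "n div 2 + 2 * k * t \<le> n" and sS: "s \<in> Sig k t"
begin

lemma s_lt: "i < k \<Longrightarrow> j < k \<Longrightarrow> a < t \<Longrightarrow> s (i, j) a < t"
  using Sig_perm[OF sS] permutes_in_image by fastforce

lemma fedges_nbr:
  assumes "{u, x} \<in> fedges n k t s"
  shows "n div 2 \<le> x \<and>
    (x < n div 2 + k * t \<longrightarrow> u \<in> (\<lambda>j. qv n k t j (s ((x - n div 2) div t, j) ((x - n div 2) mod t))) ` {..<k}) \<and>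
    (n div 2 + k * t \<le> x \<longrightarrow> u \<in> (\<lambda>i. pv n t i (inv (s (i, (x - n div 2 - k * t) div t)) ((x - n div 2 - k * t) mod t))) ` {..<k})"
proof -
  obtain i j a where H: "{u, x} = {pv n t i a, qv n k t j (s (i, j) a)}" "i < k" "j < k" "a < t"
    using assms by (auto simp: fedges_def)
  have b: "s (i, j) a < t" using s_lt H by auto
  note B = pq_bounds[OF nb H(2,4,3) b]
  have "(x = pv n t i a \<and> u = qv n k t j (s (i, j) a)) \<or> (x = qv n k t j (s (i, j) a) \<and> u = pv n t i a)"
    using H(1) by (auto simp: doubleton_eq_iff)
  then show ?thesis
  proof
    assume X: "x = pv n t i a \<and> u = qv n k t j (s (i, j) a)"
    then show ?thesis using B pv_dec[OF H(4), of n i] H(3) by auto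
  next
    assume X: "x = qv n k t j (s (i, j) a) \<and> u = pv n t i a"
    have "inv (s (i, j)) (s (i, j) a) = a" using permutes_inverses(2)[OF Sig_perm[OF sS H(2,3)]] by simp
    then show ?thesis using X B qv_dec[OF b, of n k j] H(2) by (auto intro!: image_eqI[of _ _ i])
  qed
qed

lemma GG_simple: "simple_graph {..<n} (GG n k t s)"
  using tedges_simple fedges_simple[OF nb sS] by (auto simp: simple_graph_def GG_def)

lemma GG_deg:
  assumes "2 \<le> k"
  shows "degree (GG n k t s) x \<le> k + 1"
proof -
  define A where "A = (\<lambda>j. qv n k t j (s ((x - n div 2) div t, j) ((x - n div 2) mod t))) ` {..<k}"
  define B where "B = (\<lambda>i. pv n t i (inv (s (i, (x - n div 2 - k * t) div t)) ((x - n div 2 - k * t) mod t))) ` {..<k}"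
  have cA: "card A \<le> k" unfolding A_def using card_image_le[of "{..<k}"] by simp
  have cB: "card B \<le> k" unfolding B_def using card_image_le[of "{..<k}"] by simp
  let ?N = "{u. {u, x} \<in> GG n k t s}"
  show ?thesis
  proof (cases "x < n div 2")
    case True
    have "?N \<subseteq> {(x - 1) div 2, 2 * x + 1, 2 * x + 2}"
    proof
      fix u assume "u \<in> ?N"
      then have "{u, x} \<in> tedges n \<or> {u, x} \<in> fedges n k t s" by (simp add: GG_def)
      then show "u \<in> {(x - 1) div 2, 2 * x + 1, 2 * x + 2}"
      proof
        assume "{u, x} \<in> tedges n" then show ?thesis using tedges_nbr[of u x n] by simp
      next
        assume FF: "{u, x} \<in> fedges n k t s" show ?thesis using fedges_nbr[OF FF] True by simp
      qed
    qed
    then have "card ?N \<le> card {(x - 1) div 2, 2 * x + 1, 2 * x + 2}" by (intro card_mono) auto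
    also have "\<dots> \<le> 3" by (simp add: card_insert_if)
    finally show ?thesis using assms by (simp add: degree_def)
  next
    case False
    show ?thesis
    proof (cases "x < n div 2 + k * t")
      case True
      have "?N \<subseteq> insert ((x - 1) div 2) A"
      proof
        fix u assume "u \<in> ?N"
        then have "{u, x} \<in> tedges n \<or> {u, x} \<in> fedges n k t s" by (simp add: GG_def)
        then show "u \<in> insert ((x - 1) div 2) A"
        proof
          assume "{u, x} \<in> tedges n" then show ?thesis using tedges_nbr[of u x n] False by auto
        next
          assume FF: "{u, x} \<in> fedges n k t s" show ?thesis using fedges_nbr[OF FF] True unfolding A_def by auto
        qed
      qed
      then have "card ?N \<le> card (insert ((x - 1) div 2) A)" by (intro card_mono) (auto simp: A_def)
      also have "\<dots> \<le> Suc (card A)" by (simp add: card_insert_if A_def)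
      also have "\<dots> \<le> k + 1" using cA by simp
      finally show ?thesis by (simp add: degree_def)
    next
      case F2: False
      have "?N \<subseteq> insert ((x - 1) div 2) B"
      proof
        fix u assume "u \<in> ?N"
        then have "{u, x} \<in> tedges n \<or> {u, x} \<in> fedges n k t s" by (simp add: GG_def)
        then show "u \<in> insert ((x - 1) div 2) B"
        proof
          assume "{u, x} \<in> tedges n" then show ?thesis using tedges_nbr[of u x n] False by auto
        next
          assume FF: "{u, x} \<in> fedges n k t s" show ?thesis using fedges_nbr[OF FF] F2 unfolding B_def by auto
        qed
      qed
      then have "card ?N \<le> card (insert ((x - 1) div 2) B)" by (intro card_mono) (auto simp: B_def)
      also have "\<dots> \<le> Suc (card B)" by (simp add: card_insert_if B_def)
      also have "\<dots> \<le> k + 1" using cB by simp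
      finally show ?thesis by (simp add: degree_def)
    qed
  qed
qed

end

lemma GG_inj:
  assumes nb: "n div 2 + 2 * k * t \<le> n" and sS: "s \<in> Sig k t" and sS': "s' \<in> Sig k t"
    and eq: "GG n k t s = GG n k t s'"
  shows "s = s'"
proof (rule ext)
  fix p :: "nat \<times> nat"
  obtain i j where p: "p = (i, j)" by fastforce
  show "s p = s' p"
  proof (cases "i < k \<and> j < k")
    case False
    then show ?thesis using sS sS' p by (auto simp: Sig_def PiE_def extensional_def)
  next
    case True
    show ?thesis
    proof
      fix a
      show "s p a = s' p a"
      proof (cases "a < t")
        case False
        then show ?thesis using p True permutes_not_in[OF Sig_perm[OF sS]] permutes_not_in[OF Sig_perm[OF sS']]
          by auto
      next
        case at: True
        have b: "s (i, j) a < t" using s_lt[OF nb sS] True at by auto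
        note B = pq_bounds[OF nb _ at _ b, of i j] True
        let ?e = "{pv n t i a, qv n k t j (s (i, j) a)}"
        have "?e \<in> GG n k t s'" using eq True at by (auto simp: GG_def fedges_def)
        moreover have "?e \<notin> tedges n"
          using tedges_low[of ?e n] B by auto
        ultimately have "?e \<in> fedges n k t s'" by (auto simp: GG_def)
        then obtain i' j' a' where H: "?e = {pv n t i' a', qv n k t j' (s' (i', j') a')}" "i' < k" "j' < k" "a' < t"
          by (auto simp: fedges_def)
        have b': "s' (i', j') a' < t" using s_lt[OF nb sS'] H by auto
        note B' = pq_bounds[OF nb H(2,4,3) b']
        have "pv n t i a = pv n t i' a' \<and> qv n k t j (s (i, j) a) = qv n k t j' (s' (i', j') a')"
          using H(1) B B' by (auto simp: doubleton_eq_iff)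
        then have "i = i' \<and> a = a' \<and> j = j' \<and> s (i, j) a = s' (i', j') a'"
          using pv_dec[OF at, of n i] pv_dec[OF H(4), of n i'] qv_dec[OF b, of n k j] qv_dec[OF b', of n k j']
          by metis
        then show ?thesis using p by auto
      qed
    qed
  qed
qed


lemma ln2_bounds: "1/2 \<le> ln (2::real)" "ln (2::real) \<le> 1"
proof -
  have "exp (1/2::real) * exp (1/2) = exp 1" by (simp flip: exp_add)
  also have "\<dots> \<le> 3" by (rule exp_le)
  finally have "exp (1/2::real) ^ 2 \<le> 2 ^ 2" by (simp add: power2_eq_square)
  then have "exp (1/2::real) \<le> 2" by (rule power2_le_imp_le) simp
  then show "1/2 \<le> ln (2::real)" by (subst ln_ge_iff) auto
  have "1 + 1 \<le> exp (1::real)" by (rule exp_ge_add_one_self)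
  then have "ln (2::real) \<le> ln (exp 1)" by (subst ln_le_cancel_iff) auto
  then show "ln (2::real) \<le> 1" by simp
qed

lemma fact_lower: "(m::nat) ^ r \<le> fact (m + r)"
proof (induction r)
  case 0 then show ?case by simp
next
  case (Suc r)
  have "m ^ Suc r = m * m ^ r" by simp
  also have "\<dots> \<le> Suc (m + r) * fact (m + r)" using Suc by (intro mult_mono) auto
  also have "\<dots> = fact (m + Suc r)" by simp
  finally show ?case .
qed

lemma analytic:
  fixes n \<Delta> D :: nat
  assumes n: "real n \<ge> 2^32" and d3: "\<Delta> \<ge> 3" and ds: "real \<Delta> \<le> sqrt n"
    and D: "real D \<le> 2 * log 2 n"
  shows "(1/256) * \<Delta> * n * ln n / ln (ln n) * ln (real D + 2)
     \<le> real ((\<Delta> - 1) * (\<Delta> - 1)) * real (n div (4 * (\<Delta> - 1)) - n div (4 * (\<Delta> - 1)) div 2)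
        * ln (real (n div (4 * (\<Delta> - 1)) div 2))"
proof -
  define k where "k = \<Delta> - 1"
  define t where "t = n div (4 * k)"
  define m where "m = t div 2"
  define r where "r = t - m"
  define sn where "sn = sqrt (real n)"
  have ln2: "1/2 \<le> ln (2::real)" "ln (2::real) \<le> 1" by (rule ln2_bounds)+
  have npos: "real n > 0" using n by simp
  have sn2: "sn * sn = n" unfolding sn_def by simp
  have snge: "sn \<ge> 2^16" unfolding sn_def using n real_sqrt_le_mono[OF n] by (simp add: real_sqrt_power_even[where n=32, simplified] real_sqrt_pow2)
  have k2: "real k \<ge> 2" "real k \<ge> real \<Delta> / 2" using d3 by (auto simp: k_def)
  have ksn: "real k \<le> sn" using ds unfolding k_def sn_def by simp
  have t4: "real n < 4 * real k * (real t + 1)"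
  proof -
    have kp: "k > 0" using d3 by (simp add: k_def)
    have a: "n mod (4*k) < 4*k" using kp by simp
    have b: "n = t*(4*k) + n mod (4*k)" unfolding t_def by (rule div_mult_mod_eq[symmetric])
    have "n < 4 * k * (t + 1)" using a b by (simp add: algebra_simps)
    then have "real n < real (4 * k * (t + 1))" by (simp only: of_nat_less_iff)
    then show ?thesis by (simp add: algebra_simps)
  qed
  have tlow: "real t \<ge> real n / (4 * real k) - 1" using t4 k2 by (simp add: field_simps)
  have nk: "real n / (4 * real k) \<ge> sn / 4"
  proof -
    have "sn * real k \<le> sn * sn" using ksn snge by (intro mult_left_mono) auto
    then show ?thesis using sn2 k2 by (simp add: field_simps)
  qed
  have tm: "t \<le> 2 * m + 1" "2 * m \<le> t" unfolding m_def by auto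
  have "real t \<le> real (2 * m + 1)" using tm(1) by (simp only: of_nat_le_iff)
  then have mlow: "real m \<ge> (real t - 1) / 2" by simp
  have "real (2 * m) \<le> real t" using tm(2) by (simp only: of_nat_le_iff)
  moreover have "real r = real t - real m" unfolding r_def using tm(2) by simp
  ultimately have rlow: "real r \<ge> real t / 2" by simp
  have sn16: "sn \<ge> 16" using snge by simp
  have t1: "real t \<ge> sn / 4 - 1" using tlow nk by linarith
  have m1: "real m \<ge> sn / 8 - 1" using mlow t1 by argo
  have m16: "real m \<ge> sn / 16" using m1 sn16 by linarith
  have lnn: "ln (real n) = 2 * ln sn" unfolding sn_def using npos by (simp add: ln_sqrt)
  have ln16: "ln (16::real) \<le> 4"
  proof -
    have "ln (16::real) = ln (2 ^ 4)" by simp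
    also have "\<dots> = 4 * ln 2" by (subst ln_realpow) auto
    finally show ?thesis using ln2 by simp
  qed
  have lnsn: "ln sn \<ge> 8"
  proof -
    have "ln sn \<ge> ln (2^16)" using snge by (subst ln_le_cancel_iff) auto
    moreover have "ln ((2::real)^16) = 16 * ln 2" by (subst ln_realpow) auto
    ultimately show ?thesis using ln2 by simp
  qed
  have snpos: "sn > 0" using snge by simp
  have lnm: "ln (real m) \<ge> ln (real n) / 4"
  proof -
    have "ln (real m) \<ge> ln (sn / 16)" using m16 snpos by (subst ln_le_cancel_iff) auto
    moreover have "ln (sn / 16) = ln sn - ln 16" using snpos by (simp add: ln_div)
    ultimately show ?thesis using lnn ln16 lnsn by linarith
  qed
  have kn8: "real k * real k / 2 \<le> real k * real n / 16"
  proof -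
    have "8 * sn \<le> sn * sn" using snge by (intro mult_right_mono) auto
    then have "real k \<le> real n / 8" using ksn sn2 by simp
    then have "real k * real k \<le> real k * (real n / 8)" using k2 by (intro mult_left_mono) auto
    then show ?thesis by (simp add: field_simps)
  qed
  have kkr: "real k * real k * real r \<ge> real \<Delta> * real n / 32"
  proof -
    have "real k * real k * real r \<ge> real k * real k * (real t / 2)" using rlow k2 by (intro mult_left_mono) auto
    moreover have "real k * real k * (real t / 2) \<ge> real k * real k * ((real n / (4 * real k) - 1) / 2)"
      using tlow k2 by (intro mult_left_mono) auto
    moreover have "real k * real k * ((real n / (4 * real k) - 1) / 2) = real k * real n / 8 - real k * real k / 2"
      using k2 by (simp add: field_simps)
    moreover have "real k * real n / 16 \<ge> real \<Delta> * real n / 32"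
    proof -
      have "real \<Delta> * real n \<le> (2 * real k) * real n" using k2 npos by (intro mult_right_mono) auto
      then show ?thesis by simp
    qed
    ultimately show ?thesis using kn8 by argo
  qed
  have lnn16: "ln (real n) \<ge> 16" using lnn lnsn by linarith
  have RHS: "real k * real k * real r * ln (real m) \<ge> real \<Delta> * real n * ln (real n) / 128"
  proof -
    have "real k * real k * real r * ln (real m) \<ge> (real \<Delta> * real n / 32) * (ln (real n) / 4)"
      using kkr lnm lnn16 by (intro mult_mono) auto
    then show ?thesis by simp
  qed
  have log2n: "log 2 (real n) \<le> 2 * ln (real n)"
  proof -
    have "log 2 (real n) = ln (real n) / ln 2" by (simp add: log_def)
    also have "\<dots> \<le> ln (real n) / (1/2)" using ln2 lnn16 by (intro divide_left_mono) auto
    finally show ?thesis by simp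
  qed
  have Dln: "real D + 2 \<le> ln (real n) ^ 2"
  proof -
    have "real D + 2 \<le> 5 * ln (real n)" using D log2n lnn16 by linarith
    also have "\<dots> \<le> ln (real n) * ln (real n)" using lnn16 by (intro mult_right_mono) auto
    finally show ?thesis by (simp add: power2_eq_square)
  qed
  have lnln: "ln (ln (real n)) > 0" using lnn16 by simp
  have lnD: "ln (real D + 2) \<le> 2 * ln (ln (real n))"
  proof -
    have "ln (real D + 2) \<le> ln (ln (real n) ^ 2)" using Dln by (subst ln_le_cancel_iff) auto
    also have "\<dots> = 2 * ln (ln (real n))" using lnn16 by (subst ln_realpow) auto
    finally show ?thesis .
  qed
  have LHS: "(1/256) * \<Delta> * n * ln n / ln (ln n) * ln (real D + 2) \<le> real \<Delta> * real n * ln (real n) / 128"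
  proof -
    have "(1/256) * \<Delta> * n * ln n / ln (ln n) * ln (real D + 2)
        \<le> (1/256) * \<Delta> * n * ln n / ln (ln n) * (2 * ln (ln (real n)))"
      using lnD lnln lnn16 by (intro mult_left_mono) auto
    also have "\<dots> = real \<Delta> * real n * ln (real n) / 128" using lnln by (simp add: field_simps)
    finally show ?thesis .
  qed
  show ?thesis using LHS RHS unfolding k_def[symmetric] t_def[symmetric] m_def[symmetric] r_def[symmetric]
    by simp
qed


lemma dep_log: "x < n \<Longrightarrow> real (dep x) \<le> log 2 (real n)"
proof -
  assume x: "x < n"
  have "2 ^ dep x \<le> n" using dep_bound[of x] x by simp
  then have "real (2 ^ dep x) \<le> real n" by (simp only: of_nat_le_iff)
  then have "(2::real) ^ dep x \<le> real n" by simp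
  then have "log 2 ((2::real) ^ dep x) \<le> log 2 (real n)" by (intro log_mono) auto
  then show ?thesis by (simp add: log_nat_power)
qed

lemma family_props:
  assumes V: "bij_betw g {..<n} V" and nb: "n div 2 + 2 * k * t \<le> n" and k2: "2 \<le> k"
    and sS: "s \<in> Sig k t"
  shows "admissible V (k + 1) (gmap g (GG n k t s))"
    and "dist_graph (gmap g (GG n k t s)) u v \<in> {..2 * Max (dep ` {..<n})} \<union> {LEAST k::nat. False}"
proof -
  let ?E = "gmap g (GG n k t s)"
  have inj: "inj_on g {..<n}" and im: "g ` {..<n} = V" using V by (auto simp: bij_betw_def)
  have sg: "simple_graph {..<n} (GG n k t s)" by (rule GG_simple[OF nb sS])
  have sgV: "simple_graph V ?E" using simple_gmap[OF sg inj] unfolding im .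
  have tw: "walk ?E (dep a + dep b) (g a) (g b)" if "a < n" "b < n" for a b
  proof -
    have "walk (tedges n) (dep a) a 0" by (rule dep_walk[OF that(1)])
    moreover have "walk (tedges n) (dep b) 0 b" by (rule walk_sym[OF dep_walk[OF that(2)]])
    ultimately have "walk (tedges n) (dep a + dep b) a b" by (rule walk_append)
    then have "walk (GG n k t s) (dep a + dep b) a b" by (rule walk_mono) (auto simp: GG_def)
    then show ?thesis by (rule walk_gmap)
  qed
  have Dle: "dep a + dep b \<le> 2 * Max (dep ` {..<n})" if "a < n" "b < n" for a b
  proof -
    have "dep a \<le> Max (dep ` {..<n})" "dep b \<le> Max (dep ` {..<n})" using that by (auto intro!: Max_ge)
    then show ?thesis by simp
  qed
  have conn: "connected_graph V ?E"
    unfolding connected_graph_def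
  proof (intro ballI)
    fix u v assume "u \<in> V" "v \<in> V"
    then obtain a b where "a < n" "b < n" "u = g a" "v = g b" using im by auto
    then show "\<exists>k. walk ?E k u v" using tw by blast
  qed
  have deg: "max_degree_le V ?E (k + 1)"
    unfolding max_degree_le_def
  proof
    fix v assume "v \<in> V"
    then obtain x where x: "x < n" "v = g x" using im by auto
    have "degree ?E v = degree (GG n k t s) x" using degree_gmap[OF sg inj] x by simp
    also have "\<dots> \<le> k + 1" by (rule GG_deg[OF nb sS k2])
    finally show "degree ?E v \<le> k + 1" .
  qed
  show "admissible V (k + 1) ?E" using sgV conn deg by (simp add: admissible_def)
  show "dist_graph ?E u v \<in> {..2 * Max (dep ` {..<n})} \<union> {LEAST k::nat. False}"
  proof (cases "u \<in> V \<and> v \<in> V")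
    case True
    then obtain a b where ab: "a < n" "b < n" "u = g a" "v = g b" using im by auto
    have "dist_graph ?E u v \<le> dep a + dep b" unfolding dist_graph_def
      using tw[OF ab(1,2)] ab(3,4) by (auto intro: Least_le)
    then show ?thesis using Dle[OF ab(1,2)] by simp
  next
    case False
    show ?thesis
    proof (cases "u = v")
      case True
      then have "dist_graph ?E u v = 0" unfolding dist_graph_def by (intro Least_eq_0) simp
      then show ?thesis by simp
    next
      case uv: False
      have "\<not> walk ?E j u v" for j using walk_in_V[OF sgV, of j u v] False uv by auto
      then have "(\<lambda>j. walk ?E j u v) = (\<lambda>j. False)" by auto
      then show ?thesis unfolding dist_graph_def by simp
    qed
  qed
qed

lemma card_Sig: "card (Sig k t) = fact t ^ (k * k)" "finite (Sig k t)"
proof -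
  have c: "card {p. p permutes {..<t}} = fact t" by (rule card_permutations) auto
  show "card (Sig k t) = fact t ^ (k * k)" unfolding Sig_def
    by (simp add: card_PiE c card_cartesian_product)
  show "finite (Sig k t)" unfolding Sig_def
    by (intro finite_PiE) (auto intro: finite_permutations)
qed


lemma simple_sub: "simple_graph A E \<Longrightarrow> \<forall>e\<in>E. e \<subseteq> A"
proof
  fix e assume "simple_graph A E" "e \<in> E"
  then obtain u v where "e = {u, v}" "u \<in> A" "v \<in> A" unfolding simple_graph_def by blast
  then show "e \<subseteq> A" by simp
qed

theorem theorem4:
  fixes \<Delta> :: "nat \<Rightarrow> nat"
  assumes "\<forall>n. \<Delta> n \<ge> 3"
    and "(\<lambda>n. real (\<Delta> n)) \<in> o(\<lambda>n. sqrt (real n))"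
  shows "\<exists>c>0. \<exists>N. \<forall>n\<ge>N. \<forall>(V::nat set) (T::nat qtree).
           card V = n \<longrightarrow>
           (\<forall>E. admissible V (\<Delta> n) E \<longrightarrow> run_output T (dist_graph E) = E) \<longrightarrow>
           (\<exists>E. admissible V (\<Delta> n) E \<and>
                real (run_queries T (dist_graph E))
                  \<ge> c * real (\<Delta> n) * real n * ln (real n) / ln (ln (real n)))"
proof -
  have "eventually (\<lambda>n. norm (real (\<Delta> n)) \<le> 1 * norm (sqrt (real n))) at_top"
    by (rule landau_o.smallD[OF assms(2)]) simp
  then obtain N1 where N1: "\<And>n. n \<ge> N1 \<Longrightarrow> real (\<Delta> n) \<le> sqrt (real n)"
    by (auto simp: eventually_at_top_linorder)
  define N :: nat where "N = max N1 (2^32)"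
  show ?thesis
  proof (intro exI[of _ "1/256"] conjI exI[of _ N] allI impI)
    show "(0::real) < 1/256" by simp
    fix n V T
    assume nN: "N \<le> n" and cV: "card V = n"
      and corr: "\<forall>E. admissible V (\<Delta> n) E \<longrightarrow> run_output T (dist_graph E) = E"
    define X where "X = 1/256 * real (\<Delta> n) * real n * ln (real n) / ln (ln (real n))"
    have n32: "real n \<ge> 2^32" using nN unfolding N_def
      by (metis max.bounded_iff of_nat_le_iff of_nat_numeral of_nat_power)
    have npos: "n > 0" using n32 by (metis of_nat_0_less_iff less_le_trans zero_less_numeral zero_less_power)
    have d3: "\<Delta> n \<ge> 3" using assms(1) by simp
    have ds: "real (\<Delta> n) \<le> sqrt (real n)" using N1 nN unfolding N_def by simp
    have finV: "finite V" using cV npos card_ge_0_finite by blast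
    obtain g where g0: "bij_betw g {0..<card V} V" using ex_bij_betw_nat_finite[OF finV] by blast
    have g: "bij_betw g {..<n} V" using g0 cV by (simp add: atLeast0LessThan)
    define k where "k = \<Delta> n - 1"
    define t where "t = n div (4 * k)"
    have k2: "2 \<le> k" using d3 by (simp add: k_def)
    have Dk: "\<Delta> n = k + 1" using d3 by (simp add: k_def)
    have nb: "n div 2 + 2 * k * t \<le> n"
    proof -
      have "t * (4 * k) \<le> n" unfolding t_def by (rule div_times_less_eq_dividend)
      then have "2 * k * t \<le> n div 2" by (simp add: algebra_simps)
      then show ?thesis by linarith
    qed
    define D where "D = 2 * Max (dep ` {..<n})"
    define c0 :: nat where "c0 = (LEAST k::nat. False)"
    define R where "R = {..D} \<union> {c0}"
    define Fam where "Fam = (\<lambda>s. gmap g (GG n k t s)) ` Sig k t"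
    have adm: "admissible V (\<Delta> n) E" if "E \<in> Fam" for E
      using family_props(1)[OF g nb k2] that Dk unfolding Fam_def by auto
    have inR: "dist_graph E u v \<in> R" if "E \<in> Fam" for E u v
      using family_props(2)[OF g nb k2] that unfolding Fam_def R_def D_def c0_def by auto
    have Dreal: "real D \<le> 2 * log 2 (real n)"
    proof -
      have "dep ` {..<n} \<noteq> {}" using npos by auto
      then have "Max (dep ` {..<n}) \<in> dep ` {..<n}" by (intro Max_in) auto
      then obtain x where "x < n" "Max (dep ` {..<n}) = dep x" by auto
      then show ?thesis using dep_log[of x n] unfolding D_def by simp
    qed
    have cardFam: "card Fam = fact t ^ (k * k)"
    proof -
      have "inj_on (\<lambda>s. gmap g (GG n k t s)) (Sig k t)"
      proof (rule inj_onI)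
        fix s s' assume s: "s \<in> Sig k t" "s' \<in> Sig k t" "gmap g (GG n k t s) = gmap g (GG n k t s')"
        have sub: "\<forall>e\<in>GG n k t s. e \<subseteq> {..<n}" "\<forall>e\<in>GG n k t s'. e \<subseteq> {..<n}"
          using simple_sub[OF GG_simple[OF nb s(1)]] simple_sub[OF GG_simple[OF nb s(2)]] by auto
        have inj: "inj_on g {..<n}" using g by (simp add: bij_betw_def)
        have "GG n k t s = GG n k t s'" by (rule gmap_inj[OF inj sub(1) sub(2) s(3)])
        then show "s = s'" by (rule GG_inj[OF nb s(1,2)])
      qed
      then show ?thesis unfolding Fam_def using card_image card_Sig by metis
    qed
    have finFam: "finite Fam" unfolding Fam_def using card_Sig(2) by simp
    have FamNE: "Fam \<noteq> {}" using cardFam finFam by (metis card.empty fact_gt_zero less_numeral_extra(3) of_nat_0 power_not_zero fact_nonzero)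
    show "\<exists>E. admissible V (\<Delta> n) E \<and> X \<le> real (run_queries T (dist_graph E))"
      unfolding X_def[symmetric]
    proof (rule ccontr)
      assume "\<not> (\<exists>E. admissible V (\<Delta> n) E \<and> X \<le> real (run_queries T (dist_graph E)))"
      then have lt: "real (run_queries T (dist_graph E)) < X" if "E \<in> Fam" for E
        using adm[OF that] by force
      define q where "q = Max ((\<lambda>E. run_queries T (dist_graph E)) ` Fam)"
      have "q \<in> (\<lambda>E. run_queries T (dist_graph E)) ` Fam" unfolding q_def
        using finFam FamNE by (intro Max_in) auto
      then have qX: "real q < X" using lt by auto
      have qge: "\<forall>h\<in>dist_graph ` Fam. run_queries T h \<le> q" unfolding q_def using finFam by auto
      have ro: "run_output T (dist_graph E) = E" if "E \<in> Fam" for E using corr adm[OF that] by blast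
      have injd: "inj_on dist_graph Fam" by (metis inj_onI ro)
      have injr: "inj_on (run_output T) (dist_graph ` Fam)" by (auto simp: inj_on_def ro)
      have finR: "finite R" unfolding R_def by simp
      have cS: "card (dist_graph ` Fam) \<le> card R ^ q"
        by (rule tree_count[OF finR _ injr qge]) (use inR in auto)
      have cR: "card R \<le> D + 2"
      proof -
        have "card R \<le> card {..D} + card {c0}" unfolding R_def by (rule card_Un_le)
        then show ?thesis by simp
      qed
      have "fact t ^ (k * k) \<le> (D + 2) ^ q"
        using cS cardFam card_image[OF injd] cR power_mono by (metis le_trans zero_le)
      define m where "m = t div 2"
      define r where "r = t - t div 2"
      have "m ^ r \<le> fact t" using fact_lower[of m r] by (simp add: m_def r_def)
      then have "(m ^ r) ^ (k * k) \<le> (D + 2) ^ q"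
        using \<open>fact t ^ (k * k) \<le> (D + 2) ^ q\<close> power_mono by (metis le_trans zero_le)
      then have ineq: "real m ^ (r * (k * k)) \<le> real (D + 2) ^ q"
        by (metis of_nat_le_iff of_nat_power power_mult)
      have an: "X * ln (real D + 2) \<le> real (k * k) * real r * ln (real m)"
        using analytic[OF n32 d3 ds Dreal] unfolding X_def m_def r_def k_def t_def by simp
      have "real m \<ge> 1"
      proof -
        have s16: "16 \<le> sqrt (real n)" using n32 by (intro real_le_rsqrt) (simp add: power2_eq_square)
        have "16 * real k \<le> 16 * sqrt (real n)" using ds Dk by simp
        also have "\<dots> \<le> sqrt (real n) * sqrt (real n)" using s16 by (intro mult_right_mono) auto
        also have "\<dots> = real n" by simp
        finally have "real (4 * (4 * k)) \<le> real n" by simp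
        then have "4 * (4 * k) \<le> n" by (simp only: of_nat_le_iff)
        then have "4 \<le> t" unfolding t_def using k2 by (subst less_eq_div_iff_mult_less_eq) auto
        then show ?thesis unfolding m_def by simp
      qed
      have lnD: "ln (real D + 2) > 0" by simp
      have "real (r * (k * k)) * ln (real m) \<le> real q * ln (real D + 2)"
      proof -
        have "ln (real m ^ (r * (k * k))) \<le> ln (real (D + 2) ^ q)"
          using ineq \<open>real m \<ge> 1\<close> by (subst ln_le_cancel_iff) auto
        then show ?thesis using \<open>real m \<ge> 1\<close> by (simp add: ln_realpow add.commute)
      qed
      also have "\<dots> < X * ln (real D + 2)" using qX lnD by (intro mult_strict_right_mono)
      also have "\<dots> \<le> real (k * k) * real r * ln (real m)" by (rule an)
      finally show False by (simp add: algebra_simps)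
    qed
  qed
qed

end
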